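(* Let $\mathcal{A}$ be a finite set and $n\ge1$. Let $0<w_1\le w_2\le\dots\le w_n$, let $\eta_1,\dots,\eta_n>0$, let $a_1,\dots,a_n\in\mathcal{A}$, let $\hat\ell_1,\dots,\hat\ell_n:\mathcal{A}\to[0,\infty)$, and for each $i\in[n]$ let $\mathcal{M}_i\subseteq[i-1]$. Define $$\hat L_i(a)=\sum_{j\in[i-1]\setminus\mathcal{M}_i}w_j\hat\ell_j(a),\qquad \tilde L_{i+1}(a)=\sum_{j\in[i]}w_j\hat\ell_j(a),$$ and the distributions $\hat\pi_i(a)\propto\exp\big(-(\eta_i/w_i)\hat L_i(a)\big)$, $\tilde\pi_{i+1}(a)\propto\exp\big(-(\eta_i/w_i)\tilde L_{i+1}(a)\big)$ on $\mathcal{A}$. Assume $\hat\ell_i(a_i)\hat\pi_i(a_i)\le1$ for all $i\in[n]$. Then $$\sum_{i=1}^n w_i\,\hat\ell_i(a_i)\big[\hat\pi_i(a_i)-\tilde\pi_{i+1}(a_i)\big]\le\sum_{j=1}^n\sum_{a\in\mathcal{A}}\hat\ell_j(a)\Big(\eta_jw_j+\sum_{i\in[n]:\,j\in\mathcal{M}_i}\eta_iw_i\,\mathbb{I}\{a_i=a\}\Big).$$ *)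

theory Defs
  imports "HOL-Analysis.Analysis"
begin

definition gibbs :: "'a set \<Rightarrow> real \<Rightarrow> ('a \<Rightarrow> real) \<Rightarrow> 'a \<Rightarrow> real" where
  "gibbs A c L a = exp (- c * L a) / (\<Sum>b\<in>A. exp (- c * L b))"

definition Lhat :: "(nat \<Rightarrow> real) \<Rightarrow> (nat \<Rightarrow> 'a \<Rightarrow> real) \<Rightarrow> (nat \<Rightarrow> nat set) \<Rightarrow> nat \<Rightarrow> 'a \<Rightarrow> real" where
  "Lhat w l M i a = (\<Sum>j\<in>{1..<i} - M i. w j * l j a)"

definition Ltilde :: "(nat \<Rightarrow> real) \<Rightarrow> (nat \<Rightarrow> 'a \<Rightarrow> real) \<Rightarrow> nat \<Rightarrow> 'a \<Rightarrow> real" where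
  "Ltilde w l i a = (\<Sum>j\<in>{1..i}. w j * l j a)"

end

theory Submission
  imports Defs
begin

lemma gibbs_diff:
  assumes fin: "finite A" and x: "x \<in> A" and c: "c \<ge> 0" and D: "\<And>b. b \<in> A \<Longrightarrow> D b \<ge> 0"
  shows "gibbs A c L x - gibbs A c (\<lambda>b. L b + D b) x \<le> gibbs A c L x * (c * D x)"
proof -
  define Z where "Z = (\<Sum>b\<in>A. exp (- c * L b))"
  define Z' where "Z' = (\<Sum>b\<in>A. exp (- c * (L b + D b)))"
  have Z'pos: "Z' > 0" unfolding Z'_def using fin x
    by (intro sum_pos) auto
  have le: "Z' \<le> Z" unfolding Z'_def Z_def
  proof (rule sum_mono)
    fix b assume "b \<in> A"
    then have "- c * (L b + D b) \<le> - c * L b" using D[of b] c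
      by (simp add: algebra_simps mult_nonneg_nonneg)
    then show "exp (- c * (L b + D b)) \<le> exp (- c * L b)" by simp
  qed
  have p: "gibbs A c L x = exp (- c * L x) / Z" unfolding gibbs_def Z_def by simp
  have q: "gibbs A c (\<lambda>b. L b + D b) x = exp (- c * L x) * exp (- c * D x) / Z'"
    unfolding gibbs_def Z'_def by (simp add: algebra_simps exp_add[symmetric])
  have "exp (- c * L x) * exp (- c * D x) / Z \<le> exp (- c * L x) * exp (- c * D x) / Z'"
    using Z'pos le by (intro divide_left_mono) auto
  hence q2: "gibbs A c (\<lambda>b. L b + D b) x \<ge> gibbs A c L x * exp (- c * D x)"
    using p q by simp
  have e: "1 - c * D x \<le> exp (- c * D x)" using exp_ge_add_one_self[of "- c * D x"] by simp
  have pnn: "gibbs A c L x \<ge> 0" using p Z'pos le by simp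
  have "gibbs A c L x - gibbs A c (\<lambda>b. L b + D b) x \<le> gibbs A c L x * (1 - exp (- c * D x))"
    using q2 by (simp add: algebra_simps)
  also have "\<dots> \<le> gibbs A c L x * (c * D x)"
    using e pnn by (intro mult_left_mono) auto
  finally show ?thesis .
qed

lemma Ltilde_split:
  assumes "M i \<subseteq> {1..<i}" "i \<ge> 1"
  shows "Ltilde w l i a = Lhat w l M i a + (w i * l i a + (\<Sum>j\<in>M i. w j * l j a))"
proof -
  have "{1..i} = insert i {1..<i}" using assms(2) by auto
  hence "Ltilde w l i a = w i * l i a + (\<Sum>j\<in>{1..<i}. w j * l j a)"
    unfolding Ltilde_def by simp
  moreover have "(\<Sum>j\<in>{1..<i}. w j * l j a) = (\<Sum>j\<in>{1..<i} - M i. w j * l j a) + (\<Sum>j\<in>M i. w j * l j a)"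
    using sum.subset_diff[OF assms(1), of "\<lambda>j. w j * l j a"] by simp
  ultimately show ?thesis unfolding Lhat_def by simp
qed

theorem mainTheorem4:
  fixes A :: "'a set" and n :: nat and w eta :: "nat \<Rightarrow> real"
    and act :: "nat \<Rightarrow> 'a" and l :: "nat \<Rightarrow> 'a \<Rightarrow> real" and M :: "nat \<Rightarrow> nat set"
  assumes "finite A" and "n \<ge> 1"
    and "0 < w 1" and "\<And>i. 1 \<le> i \<Longrightarrow> i < n \<Longrightarrow> w i \<le> w (i + 1)"
    and "\<And>i. 1 \<le> i \<Longrightarrow> i \<le> n \<Longrightarrow> eta i > 0"
    and "\<And>i. 1 \<le> i \<Longrightarrow> i \<le> n \<Longrightarrow> act i \<in> A"
    and "\<And>i a. 1 \<le> i \<Longrightarrow> i \<le> n \<Longrightarrow> a \<in> A \<Longrightarrow> l i a \<ge> 0"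
    and "\<And>i. 1 \<le> i \<Longrightarrow> i \<le> n \<Longrightarrow> M i \<subseteq> {1..<i}"
    and "\<And>i. 1 \<le> i \<Longrightarrow> i \<le> n \<Longrightarrow>
           l i (act i) * gibbs A (eta i / w i) (Lhat w l M i) (act i) \<le> 1"
  shows "(\<Sum>i=1..n. w i * l i (act i) *
            (gibbs A (eta i / w i) (Lhat w l M i) (act i)
             - gibbs A (eta i / w i) (Ltilde w l i) (act i)))
         \<le> (\<Sum>j=1..n. \<Sum>a\<in>A. l j a *
              (eta j * w j + (\<Sum>i\<in>{i\<in>{1..n}. j \<in> M i}. eta i * w i * (if act i = a then 1 else 0))))"
proof -
  note fin = assms(1) and wmon = assms(4) and etap = assms(5) and actA = assms(6)
    and lnn = assms(7) and MM = assms(8) and lp = assms(9)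
  have wmono: "w j \<le> w (j + k)" if "1 \<le> j" "j + k \<le> n" for j k
    using that
  proof (induction k)
    case 0 then show ?case by simp
  next
    case (Suc k)
    then have "w j \<le> w (j + k)" by simp
    also have "\<dots> \<le> w (j + k + 1)" using Suc.prems by (intro wmon) auto
    finally show ?case by simp
  qed
  have wle: "w j \<le> w i" if "1 \<le> j" "j \<le> i" "i \<le> n" for i j
    using wmono[of j "i - j"] that by simp
  have wpos: "w i > 0" if "1 \<le> i" "i \<le> n" for i
    using wle[of 1 i] that assms(3) by simp
  define D where "D i a = w i * l i a + (\<Sum>j\<in>M i. w j * l j a)" for i a
  have trm: "w i * l i (act i) *
            (gibbs A (eta i / w i) (Lhat w l M i) (act i)
             - gibbs A (eta i / w i) (Ltilde w l i) (act i)) \<le> eta i * D i (act i)"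
    if i: "1 \<le> i" "i \<le> n" for i
  proof -
    let ?c = "eta i / w i"
    let ?p = "gibbs A ?c (Lhat w l M i) (act i)"
    have Lt: "Ltilde w l i = (\<lambda>b. Lhat w l M i b + D i b)"
      unfolding D_def by (intro ext Ltilde_split[where M=M and i=i, OF MM[OF i] i(1)])
    have Dnn: "D i b \<ge> 0" if "b \<in> A" for b
    proof -
      have "\<forall>j\<in>M i. 0 \<le> w j * l j b"
      proof
        fix j assume "j \<in> M i"
        then have "1 \<le> j" "j \<le> n" using MM[OF i] i by auto
        then show "0 \<le> w j * l j b" using wpos[of j] lnn[of j b] that by (simp add: less_imp_le)
      qed
      then show ?thesis unfolding D_def using wpos[OF i] lnn[OF i that]
        by (simp add: sum_nonneg)
    qed
    have cnn: "?c \<ge> 0" using etap[OF i] wpos[OF i] by simp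
    have g: "?p - gibbs A ?c (Ltilde w l i) (act i) \<le> ?p * (?c * D i (act i))"
      unfolding Lt by (rule gibbs_diff[OF fin actA[OF i] cnn Dnn])
    have wl: "w i * l i (act i) \<ge> 0" using wpos[OF i] lnn[OF i actA[OF i]] by simp
    have "w i * l i (act i) * (?p - gibbs A ?c (Ltilde w l i) (act i))
        \<le> w i * l i (act i) * (?p * (?c * D i (act i)))"
      using g wl by (rule mult_left_mono)
    also have "\<dots> = eta i * D i (act i) * (l i (act i) * ?p)"
      using wpos[OF i] by (simp add: field_simps)
    also have "\<dots> \<le> eta i * D i (act i) * 1"
      using lp[OF i] etap[OF i] Dnn[OF actA[OF i]] by (intro mult_left_mono) auto
    finally show ?thesis by simp
  qed
  have step1: "(\<Sum>i=1..n. w i * l i (act i) *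
            (gibbs A (eta i / w i) (Lhat w l M i) (act i)
             - gibbs A (eta i / w i) (Ltilde w l i) (act i)))
      \<le> (\<Sum>i=1..n. eta i * D i (act i))"
    by (rule sum_mono) (use trm in auto)
  have step2: "(\<Sum>i=1..n. eta i * D i (act i)) \<le>
     (\<Sum>i=1..n. eta i * w i * (\<Sum>a\<in>A. l i a)) + (\<Sum>i=1..n. \<Sum>j\<in>M i. eta i * w i * l j (act i))"
    unfolding sum.distrib[symmetric]
  proof (rule sum_mono)
    fix i assume "i \<in> {1..n}"
    then have i: "1 \<le> i" "i \<le> n" by auto
    have a: "l i (act i) \<le> (\<Sum>a\<in>A. l i a)"
      using member_le_sum[of "act i" A "l i"] actA[OF i] lnn[OF i] fin by auto
    have b: "(\<Sum>j\<in>M i. eta i * (w j * l j (act i))) \<le> (\<Sum>j\<in>M i. eta i * w i * l j (act i))"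
    proof (rule sum_mono)
      fix j assume "j \<in> M i"
      then have j: "1 \<le> j" "j \<le> i" using MM[OF i] by auto
      have "w j * l j (act i) \<le> w i * l j (act i)"
        using wle[OF j i(2)] lnn[of j "act i"] j i actA[OF i] by (intro mult_right_mono) auto
      then show "eta i * (w j * l j (act i)) \<le> eta i * w i * l j (act i)"
        using etap[OF i] by (simp add: mult.assoc)
    qed
    have "eta i * D i (act i) = eta i * w i * l i (act i) + (\<Sum>j\<in>M i. eta i * (w j * l j (act i)))"
      unfolding D_def by (simp add: algebra_simps sum_distrib_left)
    also have "\<dots> \<le> eta i * w i * (\<Sum>a\<in>A. l i a) + (\<Sum>j\<in>M i. eta i * w i * l j (act i))"
      using a b etap[OF i] wpos[OF i] by (intro add_mono mult_left_mono) auto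
    finally show "eta i * D i (act i) \<le> eta i * w i * (\<Sum>a\<in>A. l i a) + (\<Sum>j\<in>M i. eta i * w i * l j (act i))" .
  qed
  have inner: "(\<Sum>a\<in>A. l j a * (\<Sum>i\<in>{i\<in>{1..n}. j \<in> M i}. eta i * w i * (if act i = a then 1 else 0)))
     = (\<Sum>i\<in>{i\<in>{1..n}. j \<in> M i}. eta i * w i * l j (act i))" for j
  proof -
    have "(\<Sum>a\<in>A. l j a * (\<Sum>i\<in>{i\<in>{1..n}. j \<in> M i}. eta i * w i * (if act i = a then 1 else 0)))
       = (\<Sum>i\<in>{i\<in>{1..n}. j \<in> M i}. \<Sum>a\<in>A. eta i * w i * (if act i = a then l j a else 0))"
      by (simp add: sum_distrib_left sum.swap[of _ A] mult_ac if_distrib cong: if_cong)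
    also have "\<dots> = (\<Sum>i\<in>{i\<in>{1..n}. j \<in> M i}. eta i * w i * l j (act i))"
    proof (rule sum.cong[OF refl])
      fix i assume "i \<in> {i\<in>{1..n}. j \<in> M i}"
      then have "act i \<in> A" using actA by auto
      then show "(\<Sum>a\<in>A. eta i * w i * (if act i = a then l j a else 0)) = eta i * w i * l j (act i)"
        using fin by (simp add: sum_distrib_left[symmetric] sum.delta)
    qed
    finally show ?thesis .
  qed
  have swap: "(\<Sum>j=1..n. \<Sum>i\<in>{i\<in>{1..n}. j \<in> M i}. eta i * w i * l j (act i))
      = (\<Sum>i=1..n. \<Sum>j\<in>M i. eta i * w i * l j (act i))"
  proof -
    have "(\<Sum>j=1..n. \<Sum>i\<in>{i\<in>{1..n}. j \<in> M i}. eta i * w i * l j (act i))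
        = (\<Sum>i=1..n. \<Sum>j\<in>{j\<in>{1..n}. j \<in> M i}. eta i * w i * l j (act i))"
      by (rule sum.swap_restrict) auto
    also have "\<dots> = (\<Sum>i=1..n. \<Sum>j\<in>M i. eta i * w i * l j (act i))"
    proof (rule sum.cong[OF refl])
      fix i assume "i \<in> {1..n}"
      then have "{j\<in>{1..n}. j \<in> M i} = M i" using MM[of i] by auto
      then show "(\<Sum>j\<in>{j\<in>{1..n}. j \<in> M i}. eta i * w i * l j (act i)) = (\<Sum>j\<in>M i. eta i * w i * l j (act i))"
        by simp
    qed
    finally show ?thesis .
  qed
  have rhs: "(\<Sum>j=1..n. \<Sum>a\<in>A. l j a *
              (eta j * w j + (\<Sum>i\<in>{i\<in>{1..n}. j \<in> M i}. eta i * w i * (if act i = a then 1 else 0))))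
      = (\<Sum>i=1..n. eta i * w i * (\<Sum>a\<in>A. l i a)) + (\<Sum>i=1..n. \<Sum>j\<in>M i. eta i * w i * l j (act i))"
  proof -
    have "(\<Sum>j=1..n. \<Sum>a\<in>A. l j a *
              (eta j * w j + (\<Sum>i\<in>{i\<in>{1..n}. j \<in> M i}. eta i * w i * (if act i = a then 1 else 0))))
      = (\<Sum>j=1..n. eta j * w j * (\<Sum>a\<in>A. l j a) + (\<Sum>a\<in>A. l j a * (\<Sum>i\<in>{i\<in>{1..n}. j \<in> M i}. eta i * w i * (if act i = a then 1 else 0))))"
      by (simp only: distrib_left sum.distrib sum_distrib_left mult_ac)
    also have "\<dots> = (\<Sum>j=1..n. eta j * w j * (\<Sum>a\<in>A. l j a)) + (\<Sum>j=1..n. \<Sum>i\<in>{i\<in>{1..n}. j \<in> M i}. eta i * w i * l j (act i))"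
      by (simp only: inner sum.distrib)
    finally show ?thesis using swap by simp
  qed
  show ?thesis using step1 step2 rhs by linarith
qed

end
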